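(* Let $(\mathcal X,\mathcal F,\nu)$ be a probability space equipped with an atomic filtration (as described in the context), and let $w$ be a weight with $w>0$ $\nu$-a.e. Then for every $f\in L^1(\nu)$ with $\int_{\mathcal X}f\,d\nu=0$, $$\|f\|_{L^2(w)}\le\|S\|_{L^2(w^{-1})\to L^2(w^{-1})}\,\|Sf\|_{L^2(w)},$$ where $\|S\|_{L^2(w^{-1})\to L^2(w^{-1})}=\sup\{\|Sg\|_{L^2(w^{-1})}:\|g\|_{L^2(w^{-1})}\le1\}\in[0,\infty]$.
   Context: Atomic filtration: $\mathcal F_0\subset\mathcal F_1\subset\cdots$ is an increasing sequence of $\sigma$-algebras generating $\mathcal F$, with $\mathcal F_0=\{\emptyset,\mathcal X\}$, and each $\mathcal F_n$ is generated by a finite partition $\mathcal D_n$ of $\mathcal X$ into sets of positive measure (atoms); $\mathcal D_0=\{\mathcal X\}$. An atom is formally a pair $(I,n)$ with $I\in\mathcal D_n$; $\mathcal D=\bigcup_n\mathcal D_n$, and $\mathrm{ch}(I)$ are the atoms of $\mathcal D_{n+1}$ contained in $I$. Averages $\langle f\rangle_I=\nu(I)^{-1}\int_I f\,d\nu$, $\mathbb E_If=\langle f\rangle_I\mathbf 1_I$; $\Delta_I f=\sum_{I'\in\mathrm{ch}(I)}\mathbb E_{I'}f-\mathbb E_If$; $Sf=\big(\sum_{I\in\mathcal D}(\Delta_If)^2\big)^{1/2}$. For a weight $u>0$ a.e., $\|f\|^2_{L^2(u)}=\int|f|^2u\,d\nu$. *)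

theory Defs
  imports "HOL-Probability.Probability"
begin

text \<open>Atomic filtration: D n is the finite partition of the space into atoms
  (measurable sets of positive measure) generating F_n; F_0 trivial,
  F_n increasing, and the F_n generate the sigma-algebra of M.\<close>
definition atomic_filtration :: "'a measure \<Rightarrow> (nat \<Rightarrow> 'a set set) \<Rightarrow> bool" where
  "atomic_filtration M D \<longleftrightarrow>
     (\<forall>n. finite (D n) \<and> disjoint (D n) \<and> \<Union>(D n) = space M \<and>
          (\<forall>I\<in>D n. I \<in> sets M \<and> measure M I > 0)) \<and>
     D 0 = {space M} \<and>
     (\<forall>n. sigma_sets (space M) (D n) \<subseteq> sigma_sets (space M) (D (Suc n))) \<and>
     sets M = sigma_sets (space M) (\<Union>n. D n)"

definition avg :: "'a measure \<Rightarrow> 'a set \<Rightarrow> ('a \<Rightarrow> real) \<Rightarrow> real" where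
  "avg M I f = (\<integral>x\<in>I. f x \<partial>M) / measure M I"

definition ch :: "(nat \<Rightarrow> 'a set set) \<Rightarrow> nat \<Rightarrow> 'a set \<Rightarrow> 'a set set" where
  "ch D n I = {I' \<in> D (Suc n). I' \<subseteq> I}"

definition Delta :: "'a measure \<Rightarrow> (nat \<Rightarrow> 'a set set) \<Rightarrow> nat \<Rightarrow> 'a set \<Rightarrow> ('a \<Rightarrow> real) \<Rightarrow> 'a \<Rightarrow> real" where
  "Delta M D n I f x =
     (\<Sum>I'\<in>ch D n I. avg M I' f * indicator I' x) - avg M I f * indicator I x"

text \<open>Square of the square function: (S f x)^2 = sum over all atoms (I,n) of (Delta_(I,n) f x)^2,
  valued in [0,\<infinity>].\<close>
definition Ssq :: "'a measure \<Rightarrow> (nat \<Rightarrow> 'a set set) \<Rightarrow> ('a \<Rightarrow> real) \<Rightarrow> 'a \<Rightarrow> ennreal" where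
  "Ssq M D f x = (\<Sum>n. \<Sum>I\<in>D n. ennreal ((Delta M D n I f x)\<^sup>2))"

definition wnorm2 :: "'a measure \<Rightarrow> ('a \<Rightarrow> real) \<Rightarrow> ('a \<Rightarrow> real) \<Rightarrow> ennreal" where
  "wnorm2 M u g = (\<integral>\<^sup>+x. ennreal ((g x)\<^sup>2 * u x) \<partial>M)"

definition Snorm2 :: "'a measure \<Rightarrow> (nat \<Rightarrow> 'a set set) \<Rightarrow> ('a \<Rightarrow> real) \<Rightarrow> ('a \<Rightarrow> real) \<Rightarrow> ennreal" where
  "Snorm2 M D u g = (\<integral>\<^sup>+x. Ssq M D g x * ennreal (u x) \<partial>M)"

text \<open>Squared operator norm ||S||^2_{L^2(u) -> L^2(u)}, sup over g in L^1 (where S g is defined)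
  with ||g||_{L^2(u)} \<le> 1.\<close>
definition opnorm2 :: "'a measure \<Rightarrow> (nat \<Rightarrow> 'a set set) \<Rightarrow> ('a \<Rightarrow> real) \<Rightarrow> ennreal" where
  "opnorm2 M D u = (SUP g \<in> {g. integrable M g \<and> wnorm2 M u g \<le> 1}. Snorm2 M D u g)"

end

theory Submission
  imports Defs
begin


lemma sum_ind_at:
  assumes "finite P" "disjoint P" "J0 \<in> P" "x \<in> J0"
  shows "(\<Sum>J\<in>P. c J * indicator J x) = (c J0 :: real)"
proof -
  have "(\<Sum>J\<in>P. c J * indicator J x) = c J0 * indicator J0 x + (\<Sum>J\<in>P - {J0}. c J * indicator J x)"
    by (rule sum.remove[OF assms(1,3)])
  also have "(\<Sum>J\<in>P - {J0}. c J * indicator J x) = 0"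
  proof (rule sum.neutral, intro ballI)
    fix J assume "J \<in> P - {J0}"
    then have "x \<notin> J" using assms unfolding disjoint_def by blast
    then show "c J * indicator J x = 0" by simp
  qed
  finally show ?thesis using assms by simp
qed

lemma sum_ind_out:
  assumes "x \<notin> \<Union>P"
  shows "(\<Sum>J\<in>P. c J * indicator J x) = (0::real)"
  using assms by (intro sum.neutral) auto

lemma part_split:
  assumes "disjoint P" "A \<in> sigma_sets \<Omega> P" "J \<in> P" "J \<subseteq> \<Omega>"
  shows "J \<subseteq> A \<or> J \<inter> A = {}"
  using assms(2)
proof (induction rule: sigma_sets.induct)
  case (Basic a)
  then show ?case using assms unfolding disjoint_def by blast
next
  case Empty
  then show ?case by simp
next
  case (Compl a)
  then show ?case using assms(4) by blast
next
  case (Union a)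
  then show ?case by blast
qed

locale AF = prob_space M for M :: "'a measure" +
  fixes D :: "nat \<Rightarrow> 'a set set"
  assumes af: "atomic_filtration M D"
begin

lemma finD: "finite (D n)" and disjD: "disjoint (D n)" and coverD: "\<Union>(D n) = space M"
  and atom_sets: "I \<in> D n \<Longrightarrow> I \<in> sets M" and atom_pos: "I \<in> D n \<Longrightarrow> measure M I > 0"
  and D0: "D 0 = {space M}"
  and incr: "sigma_sets (space M) (D n) \<subseteq> sigma_sets (space M) (D (Suc n))"
  and gen: "sets M = sigma_sets (space M) (\<Union>n. D n)"
  using af unfolding atomic_filtration_def by auto

lemma atom_sub: "I \<in> D n \<Longrightarrow> I \<subseteq> space M"
  using atom_sets sets.sets_into_space by blast

lemma atom_ne: "I \<in> D n \<Longrightarrow> I \<noteq> {}"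
  using atom_pos by fastforce

lemma sigma_mono: "n \<le> m \<Longrightarrow> sigma_sets (space M) (D n) \<subseteq> sigma_sets (space M) (D m)"
  by (induction m rule: dec_induct) (use incr in auto)

lemma split_atom:
  assumes "A \<in> sigma_sets (space M) (D n)" "n \<le> m" "J \<in> D m"
  shows "J \<subseteq> A \<or> J \<inter> A = {}"
  using part_split[of "D m" A "space M" J] disjD assms sigma_mono atom_sub by blast

lemma refine: "n \<le> m \<Longrightarrow> I \<in> D n \<Longrightarrow> J \<in> D m \<Longrightarrow> J \<subseteq> I \<or> J \<inter> I = {}"
  using split_atom[of I n m J] by (meson sigma_sets.Basic)

lemma atom_of: "x \<in> space M \<Longrightarrow> \<exists>J\<in>D n. x \<in> J"
  using coverD[of n] by blast

lemma finite_ch: "finite (ch D n I)"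
  unfolding ch_def using finD[of "Suc n"] by simp

lemma disj_ch: "disjoint (ch D n I)"
  unfolding ch_def using disjD[of "Suc n"] unfolding disjoint_def by blast

lemma ch_cover: "I \<in> D n \<Longrightarrow> \<Union>(ch D n I) = I"
proof
  assume I: "I \<in> D n"
  show "\<Union>(ch D n I) \<subseteq> I" unfolding ch_def by auto
  show "I \<subseteq> \<Union>(ch D n I)"
  proof
    fix x assume "x \<in> I"
    then obtain J where J: "J \<in> D (Suc n)" "x \<in> J" using atom_of atom_sub I by blast
    then have "J \<subseteq> I" using refine[of n "Suc n" I J] I \<open>x \<in> I\<close> by auto
    then show "x \<in> \<Union>(ch D n I)" using J unfolding ch_def by auto
  qed
qed

lemma ch_sub: "J \<in> ch D n I \<Longrightarrow> J \<in> D (Suc n)" "J \<in> ch D n I \<Longrightarrow> J \<subseteq> I"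
  unfolding ch_def by auto

lemma D_Suc_UN: "D (Suc n) = (\<Union>I\<in>D n. ch D n I)"
proof
  show "D (Suc n) \<subseteq> (\<Union>I\<in>D n. ch D n I)"
  proof
    fix J assume J: "J \<in> D (Suc n)"
    obtain x where "x \<in> J" using atom_ne J by blast
    then obtain I where I: "I \<in> D n" "x \<in> I" using atom_of atom_sub J by blast
    then have "J \<subseteq> I" using refine[of n "Suc n" I J] J \<open>x \<in> J\<close> by auto
    then show "J \<in> (\<Union>I\<in>D n. ch D n I)" using I J unfolding ch_def by auto
  qed
  show "(\<Union>I\<in>D n. ch D n I) \<subseteq> D (Suc n)" unfolding ch_def by auto
qed

lemma sum_D_Suc: "(\<Sum>J\<in>D (Suc n). g J) = (\<Sum>I\<in>D n. \<Sum>J\<in>ch D n I. g J)"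
proof -
  have "(\<Sum>J\<in>(\<Union>I\<in>D n. ch D n I). g J) = (\<Sum>I\<in>D n. \<Sum>J\<in>ch D n I. g J)"
  proof (rule sum.UNION_disjoint)
    show "finite (D n)" by (rule finD)
    show "\<forall>I\<in>D n. finite (ch D n I)" using finite_ch by blast
    show "\<forall>I\<in>D n. \<forall>I'\<in>D n. I \<noteq> I' \<longrightarrow> ch D n I \<inter> ch D n I' = {}"
    proof (intro ballI impI)
      fix I I' assume II: "I \<in> D n" "I' \<in> D n" "I \<noteq> I'"
      then have "I \<inter> I' = {}" using disjD[of n] unfolding disjoint_def by blast
      then show "ch D n I \<inter> ch D n I' = {}" using atom_ne unfolding ch_def by blast
    qed
  qed
  then show ?thesis using D_Suc_UN by simp
qed

end


context AF begin

definition condE :: "nat \<Rightarrow> ('a \<Rightarrow> real) \<Rightarrow> 'a \<Rightarrow> real" where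
  "condE N g x = (\<Sum>J\<in>D N. avg M J g * indicator J x)"

lemma fin_meas: "emeasure M A < \<infinity>"
  by (simp add: less_top[symmetric])

lemma avg_meas: "I \<in> D n \<Longrightarrow> avg M I g * measure M I = (\<integral>x\<in>I. g x \<partial>M)"
  using atom_pos[of I n] unfolding avg_def by simp

lemma ind_split:
  assumes "I \<in> D n" "x \<in> space M"
  shows "indicator I x = (\<Sum>J\<in>ch D n I. indicator J x :: real)"
proof (cases "x \<in> I")
  case True
  then obtain J where J: "J \<in> ch D n I" "x \<in> J" using ch_cover[OF assms(1)] by blast
  have "(\<Sum>J\<in>ch D n I. 1 * indicator J x :: real) = 1"
    using sum_ind_at[OF finite_ch disj_ch J] .
  then show ?thesis using True by simp
next
  case False
  then have "x \<notin> \<Union>(ch D n I)" using ch_cover[OF assms(1)] by blast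
  then have "(\<Sum>J\<in>ch D n I. 1 * indicator J x :: real) = 0" by (rule sum_ind_out)
  then show ?thesis using False by simp
qed

lemma ind_total:
  assumes "x \<in> space M"
  shows "(\<Sum>J\<in>D n. indicator J x :: real) = 1"
proof -
  obtain J where J: "J \<in> D n" "x \<in> J" using atom_of assms by blast
  show ?thesis using sum_ind_at[OF finD disjD J, of "\<lambda>_. 1"] by simp
qed

lemma set_int_split:
  fixes g :: "'a \<Rightarrow> real"
  assumes "integrable M g" "I \<in> D n"
  shows "(\<integral>x\<in>I. g x \<partial>M) = (\<Sum>J\<in>ch D n I. (\<integral>x\<in>J. g x \<partial>M))"
proof -
  have "(\<integral>x\<in>I. g x \<partial>M) = (\<integral>x. (\<Sum>J\<in>ch D n I. indicator J x * g x) \<partial>M)"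
    unfolding set_lebesgue_integral_def
  proof (rule Bochner_Integration.integral_cong)
    fix x assume x: "x \<in> space M"
    show "indicator I x *\<^sub>R g x = (\<Sum>J\<in>ch D n I. indicator J x * g x)"
      using ind_split[OF assms(2) x] by (simp add: sum_distrib_right)
  qed simp
  also have "\<dots> = (\<Sum>J\<in>ch D n I. (\<integral>x. indicator J x * g x \<partial>M))"
    by (rule Bochner_Integration.integral_sum) (use integrable_mult_indicator[OF _ assms(1)] atom_sets ch_sub in auto)
  finally show ?thesis unfolding set_lebesgue_integral_def by simp
qed

lemma int_total:
  fixes g :: "'a \<Rightarrow> real"
  assumes "integrable M g"
  shows "(\<integral>x. g x \<partial>M) = (\<Sum>J\<in>D n. (\<integral>x\<in>J. g x \<partial>M))"
proof -
  have "(\<integral>x. g x \<partial>M) = (\<integral>x. (\<Sum>J\<in>D n. indicator J x * g x) \<partial>M)"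
  proof (rule Bochner_Integration.integral_cong)
    fix x assume x: "x \<in> space M"
    show "g x = (\<Sum>J\<in>D n. indicator J x * g x)"
      using ind_total[OF x, of n] by (simp add: sum_distrib_right[symmetric])
  qed simp
  also have "\<dots> = (\<Sum>J\<in>D n. (\<integral>x. indicator J x * g x \<partial>M))"
    by (rule Bochner_Integration.integral_sum) (use integrable_mult_indicator[OF _ assms(1)] atom_sets in auto)
  finally show ?thesis unfolding set_lebesgue_integral_def by simp
qed

lemma avg_ch:
  fixes g :: "'a \<Rightarrow> real"
  assumes "integrable M g" "I \<in> D n"
  shows "(\<Sum>J\<in>ch D n I. avg M J g * measure M J) = avg M I g * measure M I"
  using set_int_split[OF assms] avg_meas[OF assms(2)] avg_meas ch_sub
  by (metis (no_types, lifting) sum.cong)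

lemma avg_one: "I \<in> D n \<Longrightarrow> avg M I (\<lambda>_. 1) = 1"
  using atom_pos[of I n] atom_sets[of I n] unfolding avg_def set_lebesgue_integral_def
  by (simp add: Int_absorb2 atom_sub)

lemma mu_ch: "I \<in> D n \<Longrightarrow> (\<Sum>J\<in>ch D n I. measure M J) = measure M I"
proof -
  assume I: "I \<in> D n"
  have "(\<Sum>J\<in>ch D n I. avg M J (\<lambda>_. 1) * measure M J) = (\<Sum>J\<in>ch D n I. measure M J)"
    by (rule sum.cong) (auto intro: avg_one[OF ch_sub(1)])
  then show ?thesis using avg_ch[of "\<lambda>_. 1" I n] avg_one[OF I] I by simp
qed

lemma avg_cong: "I \<in> D n \<Longrightarrow> (\<And>x. x \<in> space M \<Longrightarrow> f x = g x) \<Longrightarrow> avg M I f = avg M I g"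
proof -
  assume "\<And>x. x \<in> space M \<Longrightarrow> f x = g x"
  then have "(\<integral>x. indicator I x *\<^sub>R f x \<partial>M) = (\<integral>x. indicator I x *\<^sub>R g x \<partial>M)"
    by (intro Bochner_Integration.integral_cong) auto
  then show ?thesis unfolding avg_def set_lebesgue_integral_def by simp
qed

lemma avg_add:
  fixes f g :: "'a \<Rightarrow> real"
  assumes f: "integrable M f" and g: "integrable M g" and I: "I \<in> D n"
  shows "avg M I (\<lambda>x. f x + g x) = avg M I f + avg M I g"
proof -
  have i1: "integrable M (\<lambda>x. indicator I x * f x)"
    using integrable_mult_indicator[OF atom_sets[OF I] f] by simp
  have i2: "integrable M (\<lambda>x. indicator I x * g x)"
    using integrable_mult_indicator[OF atom_sets[OF I] g] by simp
  show ?thesis unfolding avg_def set_lebesgue_integral_def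
    by (simp add: distrib_left add_divide_distrib Bochner_Integration.integral_add[OF i1 i2])
qed

lemma avg_cmult: "avg M I (\<lambda>x. c * f x) = c * avg M I f"
proof -
  have "(\<integral>x. indicator I x *\<^sub>R (c * f x) \<partial>M) = c * (\<integral>x. indicator I x *\<^sub>R f x \<partial>M)"
    by (simp add: mult.left_commute)
  then show ?thesis unfolding avg_def set_lebesgue_integral_def by simp
qed

lemma avg_ind:
  assumes I: "I \<in> D n" and A: "A \<in> sets M"
  shows "avg M I (indicator A) = measure M (I \<inter> A) / measure M I"
proof -
  have "I \<inter> A \<inter> space M = I \<inter> A" using atom_sub I by blast
  then show ?thesis unfolding avg_def set_lebesgue_integral_def
    by (simp add: indicator_inter_arith[symmetric])
qed

end


context AF begin

lemma step_meas: "(\<lambda>x. \<Sum>J\<in>D N. c J * indicator J x :: real) \<in> borel_measurable M"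
  by (rule borel_measurable_sum) (use atom_sets in auto)

lemma step_int: "integrable M (\<lambda>x. \<Sum>J\<in>D N. c J * indicator J x :: real)"
  by (rule Bochner_Integration.integrable_sum) (use atom_sets fin_meas in auto)

lemma step_integral: "(\<integral>x. (\<Sum>J\<in>D N. c J * indicator J x) \<partial>M) = (\<Sum>J\<in>D N. c J * measure M J)"
proof -
  have "(\<integral>x. (\<Sum>J\<in>D N. c J * indicator J x) \<partial>M) = (\<Sum>J\<in>D N. (\<integral>x. c J * indicator J x \<partial>M))"
    by (rule Bochner_Integration.integral_sum) (use atom_sets fin_meas in auto)
  also have "\<dots> = (\<Sum>J\<in>D N. c J * measure M J)"
    by (rule sum.cong) (use atom_sub in \<open>auto simp: Int_absorb2\<close>)
  finally show ?thesis .
qed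

lemma condE_meas: "condE N g \<in> borel_measurable M"
  unfolding condE_def[abs_def] by (rule step_meas)

lemma condE_int: "integrable M (condE N g)"
  unfolding condE_def[abs_def] by (rule step_int)

lemma condE_at: "J \<in> D N \<Longrightarrow> x \<in> J \<Longrightarrow> condE N g x = avg M J g"
  unfolding condE_def using sum_ind_at[OF finD disjD, of J N x "\<lambda>J. avg M J g"] by blast

lemma atom_obtain:
  assumes "x \<in> space M" obtains J where "J \<in> D N" "x \<in> J"
  using atom_of[OF assms] by blast

lemma condE_cong: "(\<And>x. x \<in> space M \<Longrightarrow> f x = g x) \<Longrightarrow> condE N f = condE N g"
  unfolding condE_def[abs_def] by (intro ext sum.cong refl) (metis avg_cong)

lemma condE_add:
  assumes "integrable M f" "integrable M g"
  shows "condE N (\<lambda>x. f x + g x) x = condE N f x + condE N g x"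
  unfolding condE_def using avg_add[OF assms]
  by (simp add: distrib_right sum.distrib)

lemma condE_cmult: "condE N (\<lambda>x. c * f x) x = c * condE N f x"
  unfolding condE_def by (simp add: avg_cmult sum_distrib_left mult.assoc)

lemma condE_diff:
  assumes "integrable M f" "integrable M g"
  shows "condE N (\<lambda>x. f x - g x) x = condE N f x - condE N g x"
proof -
  have "condE N (\<lambda>x. f x - g x) x = condE N (\<lambda>x. f x + (-1) * g x) x" by simp
  also have "\<dots> = condE N f x + condE N (\<lambda>x. (-1) * g x) x"
    by (rule condE_add) (use assms in auto)
  finally show ?thesis using condE_cmult[of N "-1" g x] by simp
qed

lemma condE_one: "x \<in> space M \<Longrightarrow> condE N (\<lambda>_. 1) x = 1"
  by (metis atom_obtain avg_one condE_at)

lemma abs_condE: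
  assumes "x \<in> space M"
  shows "\<bar>condE N g x\<bar> = (\<Sum>J\<in>D N. \<bar>avg M J g\<bar> * indicator J x)"
proof -
  obtain J where J: "J \<in> D N" "x \<in> J" using atom_obtain assms by blast
  show ?thesis using condE_at[OF J] sum_ind_at[OF finD disjD J] by simp
qed

lemma set_int_abs:
  fixes g :: "'a \<Rightarrow> real"
  assumes "integrable M g"
  shows "\<bar>\<integral>x\<in>J. g x \<partial>M\<bar> \<le> (\<integral>x\<in>J. \<bar>g x\<bar> \<partial>M)"
proof -
  have "\<bar>\<integral>x. indicator J x * g x \<partial>M\<bar> \<le> (\<integral>x. \<bar>indicator J x * g x\<bar> \<partial>M)"
    by (rule integral_abs_bound)
  also have "(\<lambda>x. \<bar>indicator J x * g x\<bar>) = (\<lambda>x. indicator J x * \<bar>g x\<bar>)"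
    by (auto simp: indicator_def)
  finally show ?thesis unfolding set_lebesgue_integral_def by simp
qed

lemma condE_contr:
  fixes g :: "'a \<Rightarrow> real"
  assumes g: "integrable M g"
  shows "(\<integral>x. \<bar>condE N g x\<bar> \<partial>M) \<le> (\<integral>x. \<bar>g x\<bar> \<partial>M)"
proof -
  have "(\<integral>x. \<bar>condE N g x\<bar> \<partial>M) = (\<integral>x. (\<Sum>J\<in>D N. \<bar>avg M J g\<bar> * indicator J x) \<partial>M)"
    by (rule Bochner_Integration.integral_cong) (auto simp: abs_condE)
  also have "\<dots> = (\<Sum>J\<in>D N. \<bar>avg M J g\<bar> * measure M J)" by (rule step_integral)
  also have "\<dots> = (\<Sum>J\<in>D N. \<bar>\<integral>x\<in>J. g x \<partial>M\<bar>)"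
  proof (rule sum.cong)
    fix J assume J: "J \<in> D N"
    have "\<bar>avg M J g\<bar> * measure M J = \<bar>avg M J g * measure M J\<bar>" by (simp add: abs_mult)
    then show "\<bar>avg M J g\<bar> * measure M J = \<bar>\<integral>x\<in>J. g x \<partial>M\<bar>" using avg_meas[OF J] by simp
  qed simp
  also have "\<dots> \<le> (\<Sum>J\<in>D N. (\<integral>x\<in>J. \<bar>g x\<bar> \<partial>M))"
    by (rule sum_mono) (rule set_int_abs[OF g])
  also have "\<dots> = (\<integral>x. \<bar>g x\<bar> \<partial>M)"
    using int_total[of "\<lambda>x. \<bar>g x\<bar>" N] g by simp
  finally show ?thesis .
qed

end


context AF begin

definition L1c :: "('a \<Rightarrow> real) \<Rightarrow> bool" where
  "L1c f \<longleftrightarrow> (\<lambda>N. \<integral>x. \<bar>condE N f x - f x\<bar> \<partial>M) \<longlonglongrightarrow> 0"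

lemma int_absdiff: "integrable M f \<Longrightarrow> integrable M g \<Longrightarrow> integrable M (\<lambda>x. \<bar>f x - g x\<bar> :: real)"
  by (intro integrable_abs Bochner_Integration.integrable_diff)

lemma L1c_add:
  assumes f: "integrable M f" and g: "integrable M g" and "L1c f" "L1c g"
  shows "L1c (\<lambda>x. f x + g x)"
  unfolding L1c_def
proof (rule Lim_null_comparison)
  have "(\<lambda>N. (\<integral>x. \<bar>condE N f x - f x\<bar> \<partial>M) + (\<integral>x. \<bar>condE N g x - g x\<bar> \<partial>M)) \<longlonglongrightarrow> 0 + 0"
    using assms unfolding L1c_def by (intro tendsto_add)
  then show "(\<lambda>N. (\<integral>x. \<bar>condE N f x - f x\<bar> \<partial>M) + (\<integral>x. \<bar>condE N g x - g x\<bar> \<partial>M)) \<longlonglongrightarrow> 0"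
    by simp
  show "\<forall>\<^sub>F N in sequentially. norm (\<integral>x. \<bar>condE N (\<lambda>x. f x + g x) x - (f x + g x)\<bar> \<partial>M)
      \<le> (\<integral>x. \<bar>condE N f x - f x\<bar> \<partial>M) + (\<integral>x. \<bar>condE N g x - g x\<bar> \<partial>M)"
  proof (intro always_eventually allI)
    fix N
    have i1: "integrable M (\<lambda>x. \<bar>condE N f x - f x\<bar>)" using f by (intro int_absdiff condE_int)
    have i2: "integrable M (\<lambda>x. \<bar>condE N g x - g x\<bar>)" using g by (intro int_absdiff condE_int)
    have i3: "integrable M (\<lambda>x. \<bar>condE N (\<lambda>x. f x + g x) x - (f x + g x)\<bar>)"
      using f g by (intro int_absdiff condE_int Bochner_Integration.integrable_add)
    have "(\<integral>x. \<bar>condE N (\<lambda>x. f x + g x) x - (f x + g x)\<bar> \<partial>M)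
       \<le> (\<integral>x. \<bar>condE N f x - f x\<bar> + \<bar>condE N g x - g x\<bar> \<partial>M)"
      by (rule integral_mono[OF i3 Bochner_Integration.integrable_add[OF i1 i2]])
         (simp add: condE_add[OF f g])
    also have "\<dots> = (\<integral>x. \<bar>condE N f x - f x\<bar> \<partial>M) + (\<integral>x. \<bar>condE N g x - g x\<bar> \<partial>M)"
      by (rule Bochner_Integration.integral_add[OF i1 i2])
    finally show "norm (\<integral>x. \<bar>condE N (\<lambda>x. f x + g x) x - (f x + g x)\<bar> \<partial>M)
      \<le> (\<integral>x. \<bar>condE N f x - f x\<bar> \<partial>M) + (\<integral>x. \<bar>condE N g x - g x\<bar> \<partial>M)"
      by simp
  qed
qed

lemma L1c_cmult:
  assumes "L1c f" shows "L1c (\<lambda>x. c * f x)"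
proof -
  have "(\<lambda>N. \<integral>x. \<bar>condE N (\<lambda>x. c * f x) x - c * f x\<bar> \<partial>M) = (\<lambda>N. \<bar>c\<bar> * (\<integral>x. \<bar>condE N f x - f x\<bar> \<partial>M))"
    by (simp add: condE_cmult right_diff_distrib[symmetric] abs_mult)
  moreover have "(\<lambda>N. \<bar>c\<bar> * (\<integral>x. \<bar>condE N f x - f x\<bar> \<partial>M)) \<longlonglongrightarrow> \<bar>c\<bar> * 0"
    using assms unfolding L1c_def by (intro tendsto_mult tendsto_const)
  ultimately show ?thesis unfolding L1c_def by simp
qed

lemma L1c_lim:
  fixes f :: "'a \<Rightarrow> real"
  assumes f: "integrable M f" and s: "\<And>i. integrable M (s i)" "\<And>i. L1c (s i)"
    and lim: "(\<lambda>i. \<integral>x. \<bar>s i x - f x\<bar> \<partial>M) \<longlonglongrightarrow> 0"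
  shows "L1c f"
  unfolding L1c_def LIMSEQ_iff
proof (intro allI impI)
  fix r :: real assume r: "r > 0"
  have r3: "r / 3 > 0" using r by simp
  obtain i0 where i0: "\<And>n. n \<ge> i0 \<Longrightarrow> norm ((\<integral>x. \<bar>s n x - f x\<bar> \<partial>M) - 0) < r / 3"
    using lim r3 unfolding LIMSEQ_iff by blast
  define i where "i = i0"
  have i: "\<bar>\<integral>x. \<bar>s i x - f x\<bar> \<partial>M\<bar> < r / 3" using i0[of i0] unfolding i_def by simp
  obtain N0 where N0': "\<And>N. N \<ge> N0 \<Longrightarrow> norm ((\<integral>x. \<bar>condE N (s i) x - s i x\<bar> \<partial>M) - 0) < r / 3"
    using s(2)[of i] r3 unfolding L1c_def LIMSEQ_iff by blast
  have N0: "\<And>N. N \<ge> N0 \<Longrightarrow> \<bar>\<integral>x. \<bar>condE N (s i) x - s i x\<bar> \<partial>M\<bar> < r / 3"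
    using N0' by simp
  show "\<exists>N0. \<forall>N\<ge>N0. norm ((\<integral>x. \<bar>condE N f x - f x\<bar> \<partial>M) - 0) < r"
  proof (intro exI allI impI)
    fix N assume N: "N \<ge> N0"
    have i1: "integrable M (\<lambda>x. \<bar>condE N (\<lambda>x. f x - s i x) x\<bar>)"
      by (intro integrable_abs condE_int)
    have i2: "integrable M (\<lambda>x. \<bar>condE N (s i) x - s i x\<bar>)" by (intro int_absdiff condE_int s)
    have i3: "integrable M (\<lambda>x. \<bar>s i x - f x\<bar>)" by (intro int_absdiff f s)
    have i4: "integrable M (\<lambda>x. \<bar>condE N f x - f x\<bar>)" by (intro int_absdiff f condE_int)
    have "(\<integral>x. \<bar>condE N f x - f x\<bar> \<partial>M) \<le>
      (\<integral>x. \<bar>condE N (\<lambda>x. f x - s i x) x\<bar> + \<bar>condE N (s i) x - s i x\<bar> + \<bar>s i x - f x\<bar> \<partial>M)"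
    proof (rule integral_mono[OF i4])
      show "integrable M (\<lambda>x. \<bar>condE N (\<lambda>x. f x - s i x) x\<bar> + \<bar>condE N (s i) x - s i x\<bar> + \<bar>s i x - f x\<bar>)"
        using i1 i2 i3 by (intro Bochner_Integration.integrable_add)
      fix x
      show "\<bar>condE N f x - f x\<bar> \<le> \<bar>condE N (\<lambda>x. f x - s i x) x\<bar> + \<bar>condE N (s i) x - s i x\<bar> + \<bar>s i x - f x\<bar>"
        using condE_diff[OF f s(1)[of i], where N=N and x=x] by linarith
    qed
    also have "\<dots> = (\<integral>x. \<bar>condE N (\<lambda>x. f x - s i x) x\<bar> \<partial>M) + (\<integral>x. \<bar>condE N (s i) x - s i x\<bar> \<partial>M)
       + (\<integral>x. \<bar>s i x - f x\<bar> \<partial>M)"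
      using i1 i2 i3 by (simp add: Bochner_Integration.integral_add)
    also have "(\<integral>x. \<bar>condE N (\<lambda>x. f x - s i x) x\<bar> \<partial>M) \<le> (\<integral>x. \<bar>f x - s i x\<bar> \<partial>M)"
      by (rule condE_contr) (intro Bochner_Integration.integrable_diff f s)
    also have "(\<integral>x. \<bar>f x - s i x\<bar> \<partial>M) = (\<integral>x. \<bar>s i x - f x\<bar> \<partial>M)"
      by (simp add: abs_minus_commute)
    finally have "(\<integral>x. \<bar>condE N f x - f x\<bar> \<partial>M) \<le> 2 * (\<integral>x. \<bar>s i x - f x\<bar> \<partial>M) + (\<integral>x. \<bar>condE N (s i) x - s i x\<bar> \<partial>M)"
      by simp
    moreover have "0 \<le> (\<integral>x. \<bar>condE N f x - f x\<bar> \<partial>M)" by simp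
    ultimately show "norm ((\<integral>x. \<bar>condE N f x - f x\<bar> \<partial>M) - 0) < r"
      using i N0[OF N] by simp
  qed
qed

lemma condE_zero: "condE N (\<lambda>_. 0) x = 0"
  using condE_cmult[of N 0 "\<lambda>_. 0" x] by simp

lemma L1c_zero: "L1c (\<lambda>_. 0)"
  unfolding L1c_def by (simp add: condE_zero)

lemma sig_sets: "sigma_sets (space M) (D N) \<subseteq> sets M"
  unfolding gen by (rule sigma_sets_mono') auto

lemma L1c_basic:
  assumes A: "A \<in> sigma_sets (space M) (D N0)"
  shows "L1c (indicator A)"
  unfolding L1c_def
proof (rule tendsto_eventually, rule eventually_sequentiallyI)
  fix N assume N: "N \<ge> N0"
  have As: "A \<in> sets M" using A sig_sets by blast
  have "(\<integral>x. \<bar>condE N (indicator A) x - indicator A x\<bar> \<partial>M) = (\<integral>x. 0 \<partial>M)"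
  proof (rule Bochner_Integration.integral_cong)
    fix x assume x: "x \<in> space M"
    obtain J where J: "J \<in> D N" "x \<in> J" using atom_obtain x by blast
    have pos: "measure M J > 0" using atom_pos J by blast
    have "J \<subseteq> A \<or> J \<inter> A = {}" using split_atom[OF A N J(1)] .
    then show "\<bar>condE N (indicator A) x - indicator A x\<bar> = 0"
    proof
      assume "J \<subseteq> A"
      then have "J \<inter> A = J" by blast
      then show ?thesis using condE_at[OF J] avg_ind[OF J(1) As] pos J \<open>J \<subseteq> A\<close> by auto
    next
      assume "J \<inter> A = {}"
      then show ?thesis using condE_at[OF J] avg_ind[OF J(1) As] pos J by (auto simp: indicator_def)
    qed
  qed simp
  then show "(\<integral>x. \<bar>condE N (indicator A) x - indicator A x\<bar> \<partial>M) = 0" by simp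
qed

end


context AF begin

lemma int_ind: "A \<in> sets M \<Longrightarrow> integrable M (indicator A :: 'a \<Rightarrow> real)"
  using fin_meas by simp

lemma L1c_compl:
  assumes A: "A \<in> sets M" and P: "L1c (indicator A)"
  shows "L1c (indicator (space M - A))"
proof -
  have eq: "\<And>N. (\<integral>x. \<bar>condE N (indicator (space M - A)) x - indicator (space M - A) x\<bar> \<partial>M)
     = (\<integral>x. \<bar>condE N (indicator A) x - indicator A x\<bar> \<partial>M)"
  proof (rule Bochner_Integration.integral_cong)
    fix N x assume x: "x \<in> space M"
    have "condE N (indicator (space M - A)) = condE N (\<lambda>x. 1 - indicator A x)"
      by (rule condE_cong) (auto simp: indicator_def)
    then have "condE N (indicator (space M - A)) x = condE N (\<lambda>_. 1) x - condE N (indicator A) x"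
      using condE_diff[OF integrable_const int_ind[OF A], where N=N and x=x] by simp
    then show "\<bar>condE N (indicator (space M - A)) x - indicator (space M - A) x\<bar>
      = \<bar>condE N (indicator A) x - indicator A x\<bar>"
      using condE_one[OF x, of N] x by (auto simp: indicator_def)
  qed simp
  show ?thesis using P unfolding L1c_def eq .
qed

lemma sets_G: "sets M = sigma_sets (space M) (\<Union>N. sigma_sets (space M) (D N))"
proof
  show "sets M \<subseteq> sigma_sets (space M) (\<Union>N. sigma_sets (space M) (D N))"
    unfolding gen by (rule sigma_sets_mono') auto
  show "sigma_sets (space M) (\<Union>N. sigma_sets (space M) (D N)) \<subseteq> sets M"
    by (rule sets.sigma_sets_subset) (use sig_sets in auto)
qed

lemma G_Int: "Int_stable (\<Union>N. sigma_sets (space M) (D N))"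
proof (rule Int_stableI)
  fix a b assume "a \<in> (\<Union>N. sigma_sets (space M) (D N))" "b \<in> (\<Union>N. sigma_sets (space M) (D N))"
  then obtain n m where a: "a \<in> sigma_sets (space M) (D n)" and b: "b \<in> sigma_sets (space M) (D m)" by blast
  have Pw: "D (max n m) \<subseteq> Pow (space M)" using atom_sub by blast
  interpret S: sigma_algebra "space M" "sigma_sets (space M) (D (max n m))"
    by (rule sigma_algebra_sigma_sets[OF Pw])
  have "a \<in> sigma_sets (space M) (D (max n m))" "b \<in> sigma_sets (space M) (D (max n m))"
    using a b sigma_mono[of n "max n m"] sigma_mono[of m "max n m"] by auto
  then have "a \<inter> b \<in> sigma_sets (space M) (D (max n m))" by (rule S.Int)
  then show "a \<inter> b \<in> (\<Union>N. sigma_sets (space M) (D N))" by blast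
qed

lemma G_Pow: "(\<Union>N. sigma_sets (space M) (D N)) \<subseteq> Pow (space M)"
  using sig_sets sets.sets_into_space by blast

lemma L1c_sets:
  assumes "A \<in> sets M" shows "L1c (indicator A)"
proof -
  have A': "A \<in> sigma_sets (space M) (\<Union>N. sigma_sets (space M) (D N))" using assms sets_G by simp
  show ?thesis
  using G_Int G_Pow A'
  proof (induction rule: sigma_sets_induct_disjoint)
    case (basic A)
    then show ?case using L1c_basic by blast
  next
    case empty
    have "indicator {} = (\<lambda>_::'a. 0::real)" by (auto simp: fun_eq_iff)
    then show ?case using L1c_zero by simp
  next
    case (compl A)
    then show ?case using L1c_compl sets_G by simp
  next
    case (union A)
    have As: "\<And>i. A i \<in> sets M" using union(2) sets_G by auto
    define U where "U m = (\<Union>i<m. A i)" for m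
    have Us: "U m \<in> sets M" for m unfolding U_def using As by blast
    have PU: "L1c (indicator (U m))" for m
    proof (induction m)
      case 0
      have "indicator (U 0) = (\<lambda>_::'a. 0::real)" by (auto simp: fun_eq_iff U_def)
      then show ?case using L1c_zero by simp
    next
      case (Suc m)
      have d: "U m \<inter> A m = {}" using union(1) unfolding U_def disjoint_family_on_def
        by (auto) (metis IntI empty_iff less_irrefl)
      have "indicator (U (Suc m)) = (\<lambda>x. indicator (U m) x + indicator (A m) x :: real)"
        using d by (auto simp: fun_eq_iff U_def lessThan_Suc indicator_def)
      then show ?case using L1c_add[OF int_ind[OF Us] int_ind[OF As] Suc.IH union(3)] by simp
    qed
    have lim: "(\<lambda>m. \<integral>x. \<bar>indicator (U m) x - indicator (\<Union>i. A i) x :: real\<bar> \<partial>M) \<longlonglongrightarrow> (\<integral>x. 0 \<partial>M)"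
    proof (rule Bochner_Integration.integral_dominated_convergence[where w="\<lambda>_. 1"])
      show "(\<lambda>x. 0::real) \<in> borel_measurable M" by simp
      show "(\<lambda>x. \<bar>indicator (U m) x - indicator (\<Union>i. A i) x\<bar> :: real) \<in> borel_measurable M" for m
        using Us As by measurable
      show "integrable M (\<lambda>x. 1::real)" by simp
      show "AE x in M. (\<lambda>m. \<bar>indicator (U m) x - indicator (\<Union>i. A i) x\<bar> :: real) \<longlonglongrightarrow> 0"
      proof (rule AE_I2)
        fix x
        have "(\<lambda>m. indicator (U m) x :: real) \<longlonglongrightarrow> indicator (\<Union>i. A i) x"
          unfolding U_def by (rule LIMSEQ_indicator_UN)
        then have "(\<lambda>m. \<bar>indicator (U m) x - indicator (\<Union>i. A i) x\<bar> :: real) \<longlonglongrightarrow> \<bar>indicator (\<Union>i. A i) x - indicator (\<Union>i. A i) x\<bar>"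
          by (intro tendsto_rabs tendsto_diff tendsto_const)
        then show "(\<lambda>m. \<bar>indicator (U m) x - indicator (\<Union>i. A i) x\<bar> :: real) \<longlonglongrightarrow> 0" by simp
      qed
      show "AE x in M. norm (\<bar>indicator (U m) x - indicator (\<Union>i. A i) x\<bar> :: real) \<le> 1" for m
        by (rule AE_I2) (auto simp: indicator_def)
    qed
    have UA: "(\<Union>i. A i) \<in> sets M" using As by blast
    show ?case
      by (rule L1c_lim[OF int_ind[OF UA] int_ind[OF Us] PU]) (use lim in simp)
  qed
qed

lemma L1c_all:
  fixes f :: "'a \<Rightarrow> real"
  assumes "integrable M f" shows "L1c f"
  using assms
proof (induction rule: integrable_induct)
  case (base A c)
  have "(\<lambda>x. indicator A x *\<^sub>R c) = (\<lambda>x. c * indicator A x :: real)" by (simp add: fun_eq_iff)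
  then show ?case using L1c_cmult[OF L1c_sets[OF base(1)]] by simp
next
  case (add f g)
  then show ?case using L1c_add by blast
next
  case (lim f s)
  have fi: "integrable M f" by fact
  have si: "\<And>i. integrable M (s i)" by fact
  have sP: "\<And>i. L1c (s i)" by fact
  have sl: "\<And>x. x \<in> space M \<Longrightarrow> (\<lambda>i. s i x) \<longlonglongrightarrow> f x" by fact
  have sb: "\<And>i x. x \<in> space M \<Longrightarrow> norm (s i x) \<le> 2 * norm (f x)" by fact
  have lim0: "(\<lambda>i. \<integral>x. \<bar>s i x - f x\<bar> \<partial>M) \<longlonglongrightarrow> (\<integral>x. 0 \<partial>M)"
  proof (rule Bochner_Integration.integral_dominated_convergence[where w="\<lambda>x. 3 * \<bar>f x\<bar>"])
    show "(\<lambda>x. 0::real) \<in> borel_measurable M" by simp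
    show "(\<lambda>x. \<bar>s i x - f x\<bar>) \<in> borel_measurable M" for i
      by (intro borel_measurable_abs borel_measurable_diff borel_measurable_integrable fi si)
    show "integrable M (\<lambda>x. 3 * \<bar>f x\<bar>)" using integrable_abs[OF fi] by simp
    show "AE x in M. (\<lambda>i. \<bar>s i x - f x\<bar>) \<longlonglongrightarrow> 0"
    proof (rule AE_I2)
      fix x assume x: "x \<in> space M"
      have "(\<lambda>i. \<bar>s i x - f x\<bar>) \<longlonglongrightarrow> \<bar>f x - f x\<bar>"
        by (intro tendsto_rabs tendsto_diff tendsto_const sl[OF x])
      then show "(\<lambda>i. \<bar>s i x - f x\<bar>) \<longlonglongrightarrow> 0" by simp
    qed
    show "AE x in M. norm \<bar>s i x - f x\<bar> \<le> 3 * \<bar>f x\<bar>" for i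
    proof (rule AE_I2)
      fix x assume x: "x \<in> space M"
      show "norm \<bar>s i x - f x\<bar> \<le> 3 * \<bar>f x\<bar>" using sb[OF x, of i] by simp
    qed
  qed
  show ?case by (rule L1c_lim[OF fi si sP]) (use lim0 in simp)
qed

end


lemma prod_rep:
  assumes "finite P" "disjoint P"
  shows "(\<Sum>J\<in>P. a J * indicator J x) * (\<Sum>J\<in>P. b J * indicator J x) = (\<Sum>J\<in>P. (a J * b J) * indicator J x :: real)"
proof (cases "x \<in> \<Union>P")
  case True
  then obtain J where J: "J \<in> P" "x \<in> J" by blast
  show ?thesis using sum_ind_at[OF assms J] by simp
next
  case False
  then show ?thesis using sum_ind_out[OF False] by simp
qed

lemma abs_rep:
  assumes "finite P" "disjoint P"
  shows "\<bar>\<Sum>J\<in>P. a J * indicator J x\<bar> = (\<Sum>J\<in>P. \<bar>a J\<bar> * indicator J x :: real)"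
proof (cases "x \<in> \<Union>P")
  case True
  then obtain J where J: "J \<in> P" "x \<in> J" by blast
  show ?thesis using sum_ind_at[OF assms J] by simp
next
  case False
  then show ?thesis using sum_ind_out[OF False] by simp
qed

context AF begin

lemma P_int: "finite P \<Longrightarrow> P \<subseteq> sets M \<Longrightarrow> integrable M (\<lambda>x. \<Sum>J\<in>P. c J * indicator J x :: real)"
  by (rule Bochner_Integration.integrable_sum) (use fin_meas in auto)

lemma P_integral: "finite P \<Longrightarrow> P \<subseteq> sets M \<Longrightarrow>
  (\<integral>x. (\<Sum>J\<in>P. c J * indicator J x) \<partial>M) = (\<Sum>J\<in>P. c J * measure M J)"
proof -
  assume P: "finite P" "P \<subseteq> sets M"
  have "(\<integral>x. (\<Sum>J\<in>P. c J * indicator J x) \<partial>M) = (\<Sum>J\<in>P. (\<integral>x. c J * indicator J x \<partial>M))"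
    by (rule Bochner_Integration.integral_sum) (use fin_meas P in auto)
  also have "\<dots> = (\<Sum>J\<in>P. c J * measure M J)"
    by (rule sum.cong) (use P sets.Int_space_eq2 in auto)
  finally show ?thesis .
qed

lemma ch_sets: "ch D n I \<subseteq> sets M"
  using ch_sub(1) atom_sets by blast

lemma Delta_rep:
  assumes I: "I \<in> D n" and x: "x \<in> space M"
  shows "Delta M D n I g x = (\<Sum>J\<in>ch D n I. (avg M J g - avg M I g) * indicator J x)"
  unfolding Delta_def ind_split[OF I x]
  by (simp add: sum_distrib_left left_diff_distrib sum_subtractf)

definition Q :: "nat \<Rightarrow> ('a \<Rightarrow> real) \<Rightarrow> ('a \<Rightarrow> real) \<Rightarrow> real" where
  "Q N f h = (\<Sum>J\<in>D N. avg M J f * avg M J h * measure M J)"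

lemma condE_h:
  fixes f h :: "'a \<Rightarrow> real"
  assumes h: "integrable M h"
  shows "(\<integral>x. condE N f x * h x \<partial>M) = Q N f h"
proof -
  have "(\<integral>x. condE N f x * h x \<partial>M) = (\<integral>x. (\<Sum>J\<in>D N. avg M J f * (indicator J x * h x)) \<partial>M)"
    unfolding condE_def by (simp add: sum_distrib_right mult.assoc)
  also have "\<dots> = (\<Sum>J\<in>D N. (\<integral>x. avg M J f * (indicator J x * h x) \<partial>M))"
  proof (rule Bochner_Integration.integral_sum)
    fix J assume J: "J \<in> D N"
    show "integrable M (\<lambda>x. avg M J f * (indicator J x * h x))"
      using integrable_mult_indicator[OF atom_sets[OF J] h] by simp
  qed
  also have "\<dots> = (\<Sum>J\<in>D N. avg M J f * (avg M J h * measure M J))"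
  proof (rule sum.cong)
    fix J assume J: "J \<in> D N"
    show "(\<integral>x. avg M J f * (indicator J x * h x) \<partial>M) = avg M J f * (avg M J h * measure M J)"
      using avg_meas[OF J, of h] unfolding set_lebesgue_integral_def by simp
  qed simp
  finally show ?thesis unfolding Q_def by (simp add: mult.assoc)
qed

lemma f_condE:
  fixes f h :: "'a \<Rightarrow> real"
  assumes f: "integrable M f"
  shows "(\<integral>x. f x * condE N h x \<partial>M) = Q N f h"
  using condE_h[OF f, of N h] unfolding Q_def by (simp add: mult.commute mult.left_commute)

lemma Q_lim:
  fixes f h :: "'a \<Rightarrow> real"
  assumes f: "integrable M f" and hm: "h \<in> borel_measurable M" and hb: "\<And>x. x \<in> space M \<Longrightarrow> \<bar>h x\<bar> \<le> K"
  shows "(\<lambda>N. Q N f h) \<longlonglongrightarrow> (\<integral>x. f x * h x \<partial>M)"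
proof -
  obtain x0 where x0: "x0 \<in> space M" using not_empty by blast
  have K: "0 \<le> K" using hb[OF x0] by linarith
  have hi: "integrable M h" by (rule integrable_const_bound[where B=K]) (use hb hm in auto)
  have bnd: "integrable M (\<lambda>x. g x * h x)" if g: "integrable M g" for g :: "'a \<Rightarrow> real"
  proof (rule Bochner_Integration.integrable_bound[of _ "\<lambda>x. K * g x"])
    show "integrable M (\<lambda>x. K * g x)" using g by simp
    show "(\<lambda>x. g x * h x) \<in> borel_measurable M" by (rule borel_measurable_times[OF borel_measurable_integrable[OF g] hm])
    show "AE x in M. norm (g x * h x) \<le> norm (K * g x)"
    proof (rule AE_I2)
      fix x assume x: "x \<in> space M"
      have "\<bar>g x\<bar> * \<bar>h x\<bar> \<le> \<bar>g x\<bar> * K" using hb[OF x] by (intro mult_left_mono) auto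
      then show "norm (g x * h x) \<le> norm (K * g x)" using K by (simp add: abs_mult mult.commute)
    qed
  qed
  have "(\<lambda>N. Q N f h - (\<integral>x. f x * h x \<partial>M)) \<longlonglongrightarrow> 0"
  proof (rule Lim_null_comparison)
    have "(\<lambda>N. K * (\<integral>x. \<bar>condE N f x - f x\<bar> \<partial>M)) \<longlonglongrightarrow> K * 0"
      using L1c_all[OF f] unfolding L1c_def by (intro tendsto_mult tendsto_const)
    then show "(\<lambda>N. K * (\<integral>x. \<bar>condE N f x - f x\<bar> \<partial>M)) \<longlonglongrightarrow> 0" by simp
    show "\<forall>\<^sub>F N in sequentially. norm (Q N f h - (\<integral>x. f x * h x \<partial>M)) \<le> K * (\<integral>x. \<bar>condE N f x - f x\<bar> \<partial>M)"
    proof (intro always_eventually allI)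
      fix N
      have ci: "integrable M (condE N f)" by (rule condE_int)
      have "Q N f h - (\<integral>x. f x * h x \<partial>M) = (\<integral>x. (condE N f x - f x) * h x \<partial>M)"
        using condE_h[OF hi, of N f] bnd[OF ci] bnd[OF f]
        by (simp add: left_diff_distrib Bochner_Integration.integral_diff)
      also have "norm \<dots> \<le> (\<integral>x. \<bar>(condE N f x - f x) * h x\<bar> \<partial>M)"
        by simp
      also have "\<dots> \<le> (\<integral>x. K * \<bar>condE N f x - f x\<bar> \<partial>M)"
      proof (rule integral_mono)
        show "integrable M (\<lambda>x. \<bar>(condE N f x - f x) * h x\<bar>)"
          using bnd[OF Bochner_Integration.integrable_diff[OF ci f]] by (rule integrable_abs)
        show "integrable M (\<lambda>x. K * \<bar>condE N f x - f x\<bar>)" using ci f by (intro integrable_mult_right int_absdiff)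
        fix x assume x: "x \<in> space M"
        show "\<bar>(condE N f x - f x) * h x\<bar> \<le> K * \<bar>condE N f x - f x\<bar>"
          using hb[OF x] by (simp add: abs_mult mult.commute mult_right_mono)
      qed
      also have "\<dots> = K * (\<integral>x. \<bar>condE N f x - f x\<bar> \<partial>M)" by simp
      finally show "norm (Q N f h - (\<integral>x. f x * h x \<partial>M)) \<le> K * (\<integral>x. \<bar>condE N f x - f x\<bar> \<partial>M)" .
    qed
  qed
  then show ?thesis by (simp add: LIM_zero_iff)
qed

end


context AF begin

lemma DD_rep:
  assumes I: "I \<in> D n" and x: "x \<in> space M"
  shows "Delta M D n I f x * Delta M D n I h x =
    (\<Sum>J\<in>ch D n I. ((avg M J f - avg M I f) * (avg M J h - avg M I h)) * indicator J x)"
  unfolding Delta_rep[OF I x] by (rule prod_rep[OF finite_ch disj_ch])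

lemma DDabs_rep:
  assumes I: "I \<in> D n" and x: "x \<in> space M"
  shows "\<bar>Delta M D n I f x\<bar> * \<bar>Delta M D n I h x\<bar> =
    (\<Sum>J\<in>ch D n I. \<bar>(avg M J f - avg M I f) * (avg M J h - avg M I h)\<bar> * indicator J x)"
  unfolding abs_mult[symmetric] DD_rep[OF I x] by (rule abs_rep[OF finite_ch disj_ch])

lemma DD_int: "I \<in> D n \<Longrightarrow> integrable M (\<lambda>x. Delta M D n I f x * Delta M D n I h x)"
proof -
  assume I: "I \<in> D n"
  have "integrable M (\<lambda>x. Delta M D n I f x * Delta M D n I h x) \<longleftrightarrow>
    integrable M (\<lambda>x. \<Sum>J\<in>ch D n I. ((avg M J f - avg M I f) * (avg M J h - avg M I h)) * indicator J x)"
    by (rule Bochner_Integration.integrable_cong) (auto simp: DD_rep[OF I])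
  then show ?thesis by (simp add: P_int[OF finite_ch ch_sets])
qed

lemma DDabs_int: "I \<in> D n \<Longrightarrow> integrable M (\<lambda>x. \<bar>Delta M D n I f x\<bar> * \<bar>Delta M D n I h x\<bar>)"
proof -
  assume I: "I \<in> D n"
  have "integrable M (\<lambda>x. \<bar>Delta M D n I f x\<bar> * \<bar>Delta M D n I h x\<bar>) \<longleftrightarrow>
    integrable M (\<lambda>x. \<Sum>J\<in>ch D n I. \<bar>(avg M J f - avg M I f) * (avg M J h - avg M I h)\<bar> * indicator J x)"
    by (rule Bochner_Integration.integrable_cong) (auto simp: DDabs_rep[OF I])
  then show ?thesis by (simp add: P_int[OF finite_ch ch_sets])
qed

lemma DD_integral:
  fixes f h :: "'a \<Rightarrow> real"
  assumes I: "I \<in> D n" and f: "integrable M f" and h: "integrable M h"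
  shows "(\<integral>x. Delta M D n I f x * Delta M D n I h x \<partial>M) =
    (\<Sum>J\<in>ch D n I. avg M J f * avg M J h * measure M J) - avg M I f * avg M I h * measure M I"
proof -
  define fI where "fI = avg M I f"
  define hI where "hI = avg M I h"
  have "(\<integral>x. Delta M D n I f x * Delta M D n I h x \<partial>M) =
    (\<integral>x. (\<Sum>J\<in>ch D n I. ((avg M J f - fI) * (avg M J h - hI)) * indicator J x) \<partial>M)"
    unfolding fI_def hI_def by (rule Bochner_Integration.integral_cong) (auto simp: DD_rep[OF I])
  also have "\<dots> = (\<Sum>J\<in>ch D n I. ((avg M J f - fI) * (avg M J h - hI)) * measure M J)"
    by (rule P_integral[OF finite_ch ch_sets])
  also have "\<dots> = (\<Sum>J\<in>ch D n I. avg M J f * avg M J h * measure M J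
       - fI * (avg M J h * measure M J) - hI * (avg M J f * measure M J) + fI * hI * measure M J)"
    by (rule sum.cong) (auto simp: algebra_simps)
  also have "\<dots> = (\<Sum>J\<in>ch D n I. avg M J f * avg M J h * measure M J)
       - fI * (\<Sum>J\<in>ch D n I. avg M J h * measure M J) - hI * (\<Sum>J\<in>ch D n I. avg M J f * measure M J)
       + fI * hI * (\<Sum>J\<in>ch D n I. measure M J)"
    by (simp add: sum.distrib sum_subtractf sum_distrib_left)
  also have "\<dots> = (\<Sum>J\<in>ch D n I. avg M J f * avg M J h * measure M J) - fI * hI * measure M I"
    unfolding avg_ch[OF h I] avg_ch[OF f I] mu_ch[OF I] fI_def hI_def by (simp add: algebra_simps)
  finally show ?thesis unfolding fI_def hI_def .
qed

lemma Q_step: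
  fixes f h :: "'a \<Rightarrow> real"
  assumes f: "integrable M f" and h: "integrable M h"
  shows "Q (Suc N) f h = Q N f h + (\<Sum>I\<in>D N. (\<integral>x. Delta M D N I f x * Delta M D N I h x \<partial>M))"
proof -
  have "Q (Suc N) f h = (\<Sum>I\<in>D N. \<Sum>J\<in>ch D N I. avg M J f * avg M J h * measure M J)"
    unfolding Q_def by (rule sum_D_Suc)
  also have "\<dots> = (\<Sum>I\<in>D N. avg M I f * avg M I h * measure M I + (\<integral>x. Delta M D N I f x * Delta M D N I h x \<partial>M))"
    by (rule sum.cong) (auto simp: DD_integral[OF _ f h])
  also have "\<dots> = Q N f h + (\<Sum>I\<in>D N. (\<integral>x. Delta M D N I f x * Delta M D N I h x \<partial>M))"
    unfolding Q_def by (simp add: sum.distrib)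
  finally show ?thesis .
qed

lemma Q_zero:
  fixes f h :: "'a \<Rightarrow> real"
  assumes f0: "(\<integral>x. f x \<partial>M) = 0"
  shows "Q 0 f h = 0"
proof -
  have "(\<integral>x. indicator (space M) x *\<^sub>R f x \<partial>M) = (\<integral>x. f x \<partial>M)"
    by (rule Bochner_Integration.integral_cong) auto
  then have "avg M (space M) f = 0" unfolding avg_def set_lebesgue_integral_def using f0 by simp
  then show ?thesis unfolding Q_def D0 by simp
qed

lemma Q_sum:
  fixes f h :: "'a \<Rightarrow> real"
  assumes f: "integrable M f" and h: "integrable M h" and f0: "(\<integral>x. f x \<partial>M) = 0"
  shows "Q N f h = (\<Sum>n<N. \<Sum>I\<in>D n. (\<integral>x. Delta M D n I f x * Delta M D n I h x \<partial>M))"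
  by (induction N) (simp_all add: Q_zero[OF f0] Q_step[OF f h])

abbreviation Pint :: "('a \<Rightarrow> real) \<Rightarrow> ('a \<Rightarrow> real) \<Rightarrow> ennreal" where
  "Pint f h \<equiv> (\<integral>\<^sup>+x. (\<Sum>n. \<Sum>I\<in>D n. ennreal (\<bar>Delta M D n I f x\<bar> * \<bar>Delta M D n I h x\<bar>)) \<partial>M)"

lemma key:
  fixes f h :: "'a \<Rightarrow> real"
  assumes f: "integrable M f" and f0: "(\<integral>x. f x \<partial>M) = 0"
    and hm: "h \<in> borel_measurable M" and hb: "\<And>x. x \<in> space M \<Longrightarrow> \<bar>h x\<bar> \<le> K"
  shows "ennreal (\<integral>x. f x * h x \<partial>M) \<le> Pint f h"
proof -
  have h: "integrable M h" by (rule integrable_const_bound[where B=K]) (use hb hm in auto)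
  have QN: "ennreal (Q N f h) \<le> Pint f h" for N
  proof -
    have "Q N f h \<le> (\<Sum>n<N. \<Sum>I\<in>D n. (\<integral>x. \<bar>Delta M D n I f x\<bar> * \<bar>Delta M D n I h x\<bar> \<partial>M))"
      unfolding Q_sum[OF f h f0]
    proof (intro sum_mono)
      fix n I assume I: "I \<in> D n"
      show "(\<integral>x. Delta M D n I f x * Delta M D n I h x \<partial>M) \<le> (\<integral>x. \<bar>Delta M D n I f x\<bar> * \<bar>Delta M D n I h x\<bar> \<partial>M)"
        by (rule integral_mono[OF DD_int[OF I] DDabs_int[OF I]]) (simp add: abs_mult[symmetric])
    qed
    also have "\<dots> = (\<integral>x. (\<Sum>n<N. \<Sum>I\<in>D n. \<bar>Delta M D n I f x\<bar> * \<bar>Delta M D n I h x\<bar>) \<partial>M)"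
      by (subst Bochner_Integration.integral_sum, intro Bochner_Integration.integrable_sum DDabs_int, assumption)
         (intro sum.cong refl Bochner_Integration.integral_sum[symmetric] DDabs_int, assumption)
    finally have le: "ennreal (Q N f h) \<le> ennreal (\<integral>x. (\<Sum>n<N. \<Sum>I\<in>D n. \<bar>Delta M D n I f x\<bar> * \<bar>Delta M D n I h x\<bar>) \<partial>M)"
      by (rule ennreal_leI)
    also have "\<dots> = (\<integral>\<^sup>+x. ennreal (\<Sum>n<N. \<Sum>I\<in>D n. \<bar>Delta M D n I f x\<bar> * \<bar>Delta M D n I h x\<bar>) \<partial>M)"
      by (rule nn_integral_eq_integral[symmetric])
         (auto intro!: Bochner_Integration.integrable_sum DDabs_int sum_nonneg)
    also have "\<dots> = (\<integral>\<^sup>+x. (\<Sum>n<N. \<Sum>I\<in>D n. ennreal (\<bar>Delta M D n I f x\<bar> * \<bar>Delta M D n I h x\<bar>)) \<partial>M)"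
      by (rule nn_integral_cong) (simp add: sum_nonneg)
    also have "\<dots> \<le> Pint f h"
      by (intro nn_integral_mono sum_le_suminf summableI) auto
    finally show ?thesis .
  qed
  have "(\<lambda>N. ennreal (Q N f h)) \<longlonglongrightarrow> ennreal (\<integral>x. f x * h x \<partial>M)"
    by (intro tendsto_ennrealI Q_lim[OF f hm hb])
  then show ?thesis by (rule LIMSEQ_le_const2) (use QN in auto)
qed

end


lemma amgm:
  fixes a b t w :: real
  assumes t: "t > 0" and w: "w > 0"
  shows "\<bar>a\<bar> * \<bar>b\<bar> \<le> t / 2 * (a\<^sup>2 * w) + 1 / (2 * t) * (b\<^sup>2 * (1 / w))"
proof -
  define s where "s = t * w"
  have s: "s > 0" using t w unfolding s_def by simp
  have "0 \<le> (s * \<bar>a\<bar> - \<bar>b\<bar>)\<^sup>2" by simp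
  then have "2 * s * (\<bar>a\<bar> * \<bar>b\<bar>) \<le> s\<^sup>2 * a\<^sup>2 + b\<^sup>2"
    by (simp add: power2_eq_square algebra_simps)
  then have "\<bar>a\<bar> * \<bar>b\<bar> \<le> (s\<^sup>2 * a\<^sup>2 + b\<^sup>2) / (2 * s)"
    using s by (simp add: field_simps)
  also have "\<dots> = t / 2 * (a\<^sup>2 * w) + 1 / (2 * t) * (b\<^sup>2 * (1 / w))"
    using t w unfolding s_def by (simp add: field_simps power2_eq_square)
  finally show ?thesis .
qed

context AF begin

lemma Delta_meas: "I \<in> D n \<Longrightarrow> Delta M D n I g \<in> borel_measurable M"
  unfolding Delta_def[abs_def]
  by (intro borel_measurable_diff borel_measurable_sum borel_measurable_times borel_measurable_const
      borel_measurable_indicator) (use atom_sets ch_sets in blast)+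

lemma Ssq_meas: "Ssq M D g \<in> borel_measurable M"
  unfolding Ssq_def[abs_def]
  by (intro borel_measurable_suminf_order borel_measurable_sum measurable_compose[OF _ measurable_ennreal]
      borel_measurable_power Delta_meas)

lemma Delta_cmult: "Delta M D n I (\<lambda>x. c * g x) x = c * Delta M D n I g x"
  unfolding Delta_def by (simp add: avg_cmult sum_distrib_left right_diff_distrib mult.assoc)

lemma Ssq_cmult: "Ssq M D (\<lambda>x. c * g x) x = ennreal (c\<^sup>2) * Ssq M D g x"
proof -
  have "\<And>n. (\<Sum>I\<in>D n. ennreal ((Delta M D n I (\<lambda>x. c * g x) x)\<^sup>2)) = ennreal (c\<^sup>2) * (\<Sum>I\<in>D n. ennreal ((Delta M D n I g x)\<^sup>2))"
    unfolding Delta_cmult sum_distrib_left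
    by (intro sum.cong refl) (simp add: power_mult_distrib ennreal_mult del: sum_ennreal)
  then show ?thesis unfolding Ssq_def by (simp del: sum_ennreal)
qed

lemma Snorm2_cmult:
  assumes u: "u \<in> borel_measurable M"
  shows "Snorm2 M D u (\<lambda>x. c * g x) = ennreal (c\<^sup>2) * Snorm2 M D u g"
proof -
  have [measurable]: "Ssq M D g \<in> borel_measurable M" by (rule Ssq_meas)
  have [measurable]: "u \<in> borel_measurable M" by (rule u)
  show ?thesis
    unfolding Snorm2_def Ssq_cmult mult.assoc
    by (rule nn_integral_cmult) measurable
qed

lemma wnorm2_cmult:
  assumes [measurable]: "u \<in> borel_measurable M" "g \<in> borel_measurable M"
  shows "wnorm2 M u (\<lambda>x. c * g x) = ennreal (c\<^sup>2) * wnorm2 M u g"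
proof -
  have "wnorm2 M u (\<lambda>x. c * g x) = (\<integral>\<^sup>+x. ennreal (c\<^sup>2) * ennreal ((g x)\<^sup>2 * u x) \<partial>M)"
    unfolding wnorm2_def by (intro nn_integral_cong) (simp add: ennreal_mult' power_mult_distrib mult.assoc)
  also have "\<dots> = ennreal (c\<^sup>2) * wnorm2 M u g"
    unfolding wnorm2_def by (rule nn_integral_cmult) measurable
  finally show ?thesis .
qed

end


context AF begin

lemma opn:
  fixes g u :: "'a \<Rightarrow> real"
  assumes g: "integrable M g" and u: "u \<in> borel_measurable M" and r: "r > 0"
    and wn: "wnorm2 M u g \<le> ennreal r"
  shows "Snorm2 M D u g \<le> opnorm2 M D u * ennreal r"
proof -
  define c where "c = 1 / sqrt r"
  have c2: "c\<^sup>2 = 1 / r" using r unfolding c_def by (simp add: power_divide)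
  have gm: "g \<in> borel_measurable M" using g by (rule borel_measurable_integrable)
  have "wnorm2 M u (\<lambda>x. c * g x) = ennreal (1 / r) * wnorm2 M u g"
    using wnorm2_cmult[OF u gm, of c] c2 by simp
  also have "\<dots> \<le> ennreal (1 / r) * ennreal r" using wn by (rule mult_left_mono) simp
  also have "\<dots> = 1" using r by (simp add: ennreal_mult[symmetric])
  finally have "wnorm2 M u (\<lambda>x. c * g x) \<le> 1" .
  then have "Snorm2 M D u (\<lambda>x. c * g x) \<le> opnorm2 M D u"
    unfolding opnorm2_def using g by (intro SUP_upper) auto
  then have le: "ennreal (1 / r) * Snorm2 M D u g \<le> opnorm2 M D u"
    using Snorm2_cmult[OF u, of c g] c2 by simp
  have "Snorm2 M D u g = ennreal r * (ennreal (1 / r) * Snorm2 M D u g)"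
    using r by (simp add: mult.assoc[symmetric] ennreal_mult[symmetric])
  also have "\<dots> \<le> ennreal r * opnorm2 M D u" using le by (rule mult_left_mono) simp
  finally show ?thesis by (simp add: mult.commute)
qed

lemma zero_Delta:
  fixes g u :: "'a \<Rightarrow> real"
  assumes u: "u \<in> borel_measurable M" and upos: "AE x in M. u x > 0" and z: "Snorm2 M D u g = 0"
  shows "AE x in M. \<forall>n. \<forall>I\<in>D n. Delta M D n I g x = 0"
proof -
  have [measurable]: "Ssq M D g \<in> borel_measurable M" by (rule Ssq_meas)
  have [measurable]: "u \<in> borel_measurable M" by (rule u)
  have "AE x in M. Ssq M D g x * ennreal (u x) = 0"
    using z unfolding Snorm2_def by (subst (asm) nn_integral_0_iff_AE) measurable
  then show ?thesis using upos
  proof eventually_elim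
    case (elim x)
    then have "Ssq M D g x = 0" by (simp add: ennreal_eq_0_iff)
    then have "\<forall>n. (\<Sum>I\<in>D n. ennreal ((Delta M D n I g x)\<^sup>2)) = 0"
      unfolding Ssq_def by (subst (asm) suminf_eq_zero_iff) (auto simp del: sum_ennreal)
    then have "\<forall>n. \<forall>I\<in>D n. ennreal ((Delta M D n I g x)\<^sup>2) = 0"
      using finD by (simp add: sum_eq_0_iff del: sum_ennreal)
    then show ?case by (simp add: ennreal_eq_0_iff)
  qed
qed

lemma Pint_zero:
  fixes f h :: "'a \<Rightarrow> real"
  assumes "(AE x in M. \<forall>n. \<forall>I\<in>D n. Delta M D n I f x = 0) \<or> (AE x in M. \<forall>n. \<forall>I\<in>D n. Delta M D n I h x = 0)"
  shows "Pint f h = 0"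
proof -
  have "AE x in M. (\<Sum>n. \<Sum>I\<in>D n. ennreal (\<bar>Delta M D n I f x\<bar> * \<bar>Delta M D n I h x\<bar>)) = 0"
    using assms
  proof
    assume "AE x in M. \<forall>n. \<forall>I\<in>D n. Delta M D n I f x = 0"
    then show ?thesis by eventually_elim simp
  next
    assume "AE x in M. \<forall>n. \<forall>I\<in>D n. Delta M D n I h x = 0"
    then show ?thesis by eventually_elim simp
  qed
  then have "Pint f h = (\<integral>\<^sup>+x. 0 \<partial>M)" by (rule nn_integral_cong_AE)
  then show ?thesis by simp
qed

lemma Pint_bound:
  fixes f h w :: "'a \<Rightarrow> real"
  assumes w: "w \<in> borel_measurable M" and wpos: "AE x in M. w x > 0" and t: "t > 0"
  shows "Pint f h \<le> ennreal (t / 2) * Snorm2 M D w f + ennreal (1 / (2 * t)) * Snorm2 M D (\<lambda>x. 1 / w x) h"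
proof -
  have [measurable]: "Ssq M D f \<in> borel_measurable M" by (rule Ssq_meas)
  have [measurable]: "Ssq M D h \<in> borel_measurable M" by (rule Ssq_meas)
  have [measurable]: "w \<in> borel_measurable M" by (rule w)
  have "Pint f h \<le> (\<integral>\<^sup>+x. ennreal (t / 2) * (Ssq M D f x * ennreal (w x))
      + ennreal (1 / (2 * t)) * (Ssq M D h x * ennreal (1 / w x)) \<partial>M)"
  proof (rule nn_integral_mono_AE)
    show "AE x in M. (\<Sum>n. \<Sum>I\<in>D n. ennreal (\<bar>Delta M D n I f x\<bar> * \<bar>Delta M D n I h x\<bar>))
      \<le> ennreal (t / 2) * (Ssq M D f x * ennreal (w x)) + ennreal (1 / (2 * t)) * (Ssq M D h x * ennreal (1 / w x))"
      using wpos
    proof eventually_elim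
      case (elim x)
      let ?A = "\<lambda>n I. ennreal ((Delta M D n I f x)\<^sup>2) * ennreal (w x)"
      let ?B = "\<lambda>n I. ennreal ((Delta M D n I h x)\<^sup>2) * ennreal (1 / w x)"
      have "(\<Sum>n. \<Sum>I\<in>D n. ennreal (\<bar>Delta M D n I f x\<bar> * \<bar>Delta M D n I h x\<bar>))
          \<le> (\<Sum>n. \<Sum>I\<in>D n. ennreal (t / 2) * ?A n I + ennreal (1 / (2 * t)) * ?B n I)"
      proof (intro suminf_le summableI sum_mono)
        fix n I
        have "ennreal (\<bar>Delta M D n I f x\<bar> * \<bar>Delta M D n I h x\<bar>) \<le>
          ennreal (t / 2 * ((Delta M D n I f x)\<^sup>2 * w x) + 1 / (2 * t) * ((Delta M D n I h x)\<^sup>2 * (1 / w x)))"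
          by (rule ennreal_leI) (rule amgm[OF t elim])
        also have "\<dots> = ennreal (t / 2 * ((Delta M D n I f x)\<^sup>2 * w x)) + ennreal (1 / (2 * t) * ((Delta M D n I h x)\<^sup>2 * (1 / w x)))"
          by (rule ennreal_plus) (use t elim in simp_all)
        also have "ennreal (t / 2 * ((Delta M D n I f x)\<^sup>2 * w x)) = ennreal (t / 2) * ennreal ((Delta M D n I f x)\<^sup>2 * w x)"
          by (rule ennreal_mult) (use t elim in simp_all)
        also have "ennreal ((Delta M D n I f x)\<^sup>2 * w x) = ?A n I"
          by (rule ennreal_mult) (use elim in simp_all)
        also have "ennreal (1 / (2 * t) * ((Delta M D n I h x)\<^sup>2 * (1 / w x))) = ennreal (1 / (2 * t)) * ennreal ((Delta M D n I h x)\<^sup>2 * (1 / w x))"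
          by (rule ennreal_mult) (use t elim in simp_all)
        also have "ennreal ((Delta M D n I h x)\<^sup>2 * (1 / w x)) = ?B n I"
          by (rule ennreal_mult) (use elim in simp_all)
        finally show "ennreal (\<bar>Delta M D n I f x\<bar> * \<bar>Delta M D n I h x\<bar>) \<le> ennreal (t / 2) * ?A n I + ennreal (1 / (2 * t)) * ?B n I" .
      qed
      also have "\<dots> = ennreal (t / 2) * (\<Sum>n. \<Sum>I\<in>D n. ?A n I) + ennreal (1 / (2 * t)) * (\<Sum>n. \<Sum>I\<in>D n. ?B n I)"
        by (simp add: sum.distrib sum_distrib_left[symmetric] suminf_add[symmetric] del: sum_ennreal)
      also have "(\<Sum>n. \<Sum>I\<in>D n. ?A n I) = Ssq M D f x * ennreal (w x)"
        unfolding Ssq_def by (simp add: sum_distrib_right[symmetric] del: sum_ennreal)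
      also have "(\<Sum>n. \<Sum>I\<in>D n. ?B n I) = Ssq M D h x * ennreal (1 / w x)"
        unfolding Ssq_def by (simp add: sum_distrib_right[symmetric] del: sum_ennreal)
      finally show ?case .
    qed
  qed
  also have "\<dots> = ennreal (t / 2) * Snorm2 M D w f + ennreal (1 / (2 * t)) * Snorm2 M D (\<lambda>x. 1 / w x) h"
    unfolding Snorm2_def
    by (subst nn_integral_add, measurable, subst nn_integral_cmult, measurable, subst nn_integral_cmult, measurable)
  finally show ?thesis .
qed

end


lemma final_real:
  fixes a b c :: real
  assumes "a \<le> b / 2 * c + 1 / (2 * b) * (b * a)" "b > 0"
  shows "a \<le> b * c"
  using assms by (simp add: field_simps)

theorem proposition4p1:
  fixes M :: "'a measure" and D :: "nat \<Rightarrow> 'a set set"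
    and w f :: "'a \<Rightarrow> real"
  assumes "prob_space M"
    and "atomic_filtration M D"
    and "w \<in> borel_measurable M"
    and "AE x in M. w x > 0"
    and "integrable M f"
    and "(\<integral>x. f x \<partial>M) = 0"
  shows "wnorm2 M w f \<le> opnorm2 M D (\<lambda>x. 1 / w x) * Snorm2 M D w f"
proof -
  interpret AF M D
    by (rule AF.intro[OF assms(1)]) (rule AF_axioms.intro[OF assms(2)])
  note wm[measurable] = assms(3)
  note wpos = assms(4)
  note fi = assms(5)
  note f0 = assms(6)
  have fm[measurable]: "f \<in> borel_measurable M" using fi by (rule borel_measurable_integrable)
  define u where "u = (\<lambda>x. 1 / w x)"
  have um[measurable]: "u \<in> borel_measurable M" unfolding u_def by measurable
  have upos: "AE x in M. u x > 0" using wpos unfolding u_def by eventually_elim simp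
  define B where "B = opnorm2 M D u"
  define C where "C = Snorm2 M D w f"
  define h where "h K x = (if \<bar>f x\<bar> \<le> real K then f x * max 0 (min (w x) (real K)) else 0)" for K x
  have hm[measurable]: "h K \<in> borel_measurable M" for K unfolding h_def[abs_def] by measurable
  have hb: "\<bar>h K x\<bar> \<le> real K * real K" for K x
  proof (cases "\<bar>f x\<bar> \<le> real K")
    case True
    have "\<bar>max 0 (min (w x) (real K))\<bar> \<le> real K" by auto
    then have "\<bar>f x\<bar> * \<bar>max 0 (min (w x) (real K))\<bar> \<le> real K * real K"
      using True by (intro mult_mono) auto
    then show ?thesis using True unfolding h_def by (simp add: abs_mult)
  qed (simp add: h_def)
  have fh: "f x * h K x = (if \<bar>f x\<bar> \<le> real K then (f x)\<^sup>2 * max 0 (min (w x) (real K)) else 0)" for K x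
    unfolding h_def by (simp add: power2_eq_square mult.assoc)
  have fh_nn: "0 \<le> f x * h K x" for K x unfolding fh by simp
  have fh_int: "integrable M (\<lambda>x. f x * h K x)" for K
  proof (rule integrable_const_bound[where B="real K * (real K * real K)"])
    show "AE x in M. norm (f x * h K x) \<le> real K * (real K * real K)"
    proof (rule AE_I2)
      fix x
      show "norm (f x * h K x) \<le> real K * (real K * real K)"
      proof (cases "\<bar>f x\<bar> \<le> real K")
        case True
        have "\<bar>f x\<bar> * \<bar>h K x\<bar> \<le> real K * (real K * real K)"
          by (rule mult_mono) (use True hb[of K x] in auto)
        then show ?thesis by (simp add: abs_mult)
      qed (simp add: h_def)
    qed
    show "(\<lambda>x. f x * h K x) \<in> borel_measurable M" by measurable
  qed
  have hi: "integrable M (h K)" for K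
    by (rule integrable_const_bound[where B="real K * real K"]) (use hb in auto)
  have sup_pt: "ennreal ((f x)\<^sup>2 * w x) = (SUP K. ennreal (f x * h K x))" for x
  proof (rule antisym)
    show "(SUP K. ennreal (f x * h K x)) \<le> ennreal ((f x)\<^sup>2 * w x)"
    proof (rule SUP_least)
      fix K
      show "ennreal (f x * h K x) \<le> ennreal ((f x)\<^sup>2 * w x)"
      proof (cases "w x > 0")
        case True
        have "f x * h K x \<le> (f x)\<^sup>2 * w x" unfolding fh
          using True by (auto intro: mult_left_mono)
        then show ?thesis by (rule ennreal_leI)
      next
        case False
        then have "f x * h K x = 0" unfolding fh by auto
        then show ?thesis by (simp only: ennreal_0) simp
      qed
    qed
    show "ennreal ((f x)\<^sup>2 * w x) \<le> (SUP K. ennreal (f x * h K x))"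
    proof (cases "w x > 0")
      case True
      define K0 where "K0 = nat \<lceil>max \<bar>f x\<bar> (w x)\<rceil>"
      have "max \<bar>f x\<bar> (w x) \<le> real K0" unfolding K0_def by linarith
      then have "f x * h K0 x = (f x)\<^sup>2 * w x" unfolding fh using True by auto
      then show ?thesis by (metis SUP_upper UNIV_I)
    next
      case False
      then have "(f x)\<^sup>2 * w x \<le> 0" by (simp add: mult_nonneg_nonpos)
      then have "ennreal ((f x)\<^sup>2 * w x) = 0" by (simp add: ennreal_eq_0_iff)
      then show ?thesis by simp
    qed
  qed
  have inc: "incseq (\<lambda>K x. ennreal (f x * h K x))"
  proof (rule incseq_SucI, rule le_funI)
    fix K x
    show "ennreal (f x * h K x) \<le> ennreal (f x * h (Suc K) x)"
    proof (rule ennreal_leI)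
      show "f x * h K x \<le> f x * h (Suc K) x" unfolding fh
        by (auto intro!: mult_left_mono)
    qed
  qed
  have W: "wnorm2 M w f = (SUP K. (\<integral>\<^sup>+x. ennreal (f x * h K x) \<partial>M))"
    unfolding wnorm2_def sup_pt
    by (rule nn_integral_monotone_convergence_SUP[OF inc]) measurable
  have each: "(\<integral>\<^sup>+x. ennreal (f x * h K x) \<partial>M) \<le> B * C" for K
  proof -
    define a where "a = (\<integral>x. f x * h K x \<partial>M)"
    have ia: "(\<integral>\<^sup>+x. ennreal (f x * h K x) \<partial>M) = ennreal a"
      unfolding a_def by (rule nn_integral_eq_integral[OF fh_int]) (simp add: fh_nn)
    have a0: "0 \<le> a" unfolding a_def by (simp add: fh_nn)
    have keyK: "ennreal a \<le> Pint f (h K)"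
      unfolding a_def by (rule key[OF fi f0 hm, of K "real K * real K"]) (rule hb)
    have wn: "wnorm2 M u (h K) \<le> ennreal a"
      unfolding wnorm2_def ia[symmetric]
    proof (rule nn_integral_mono, rule ennreal_leI)
      fix x
      show "(h K x)\<^sup>2 * u x \<le> f x * h K x"
      proof (cases "\<bar>f x\<bar> \<le> real K \<and> w x > 0")
        case True
        define m where "m = max 0 (min (w x) (real K))"
        have m: "0 \<le> m" "m \<le> w x" unfolding m_def using True by auto
        have "m * m \<le> m * w x" using m by (intro mult_left_mono) auto
        then have "m * m / w x \<le> m" using True by (simp add: field_simps)
        then have "(f x)\<^sup>2 * (m * m / w x) \<le> (f x)\<^sup>2 * m" by (intro mult_left_mono) auto
        then show ?thesis using True unfolding fh h_def u_def m_def[symmetric]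
          by (simp add: power2_eq_square field_simps)
      next
        case False
        then show ?thesis
        proof (cases "\<bar>f x\<bar> \<le> real K")
          case True
          with False have "w x \<le> 0" by auto
          then show ?thesis unfolding h_def using True by simp
        qed (simp add: h_def)
      qed
    qed
    show ?thesis
    proof (cases "a = 0")
      case True
      then show ?thesis using ia by simp
    next
      case False
      then have apos: "a > 0" using a0 by simp
      have Dle: "Snorm2 M D u (h K) \<le> B * ennreal a"
        unfolding B_def by (rule opn[OF hi um apos wn])
      show ?thesis
      proof (cases "C = 0 \<or> Snorm2 M D u (h K) = 0")
        case True
        have "Pint f (h K) = 0"
        proof (rule Pint_zero)
          show "(AE x in M. \<forall>n. \<forall>I\<in>D n. Delta M D n I f x = 0) \<or> (AE x in M. \<forall>n. \<forall>I\<in>D n. Delta M D n I (h K) x = 0)"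
            using True zero_Delta[OF wm wpos, of f] zero_Delta[OF um upos, of "h K"] unfolding C_def by blast
        qed
        then show ?thesis using ia keyK by simp
      next
        case False
        then have C0: "C \<noteq> 0" and D0': "Snorm2 M D u (h K) \<noteq> 0" by auto
        have B0: "B \<noteq> 0" using Dle D0' by auto
        show ?thesis
        proof (cases "B = \<top> \<or> C = \<top>")
          case True
          then have "B * C = \<top>" using B0 C0 by (auto simp: ennreal_mult_eq_top_iff)
          then show ?thesis by simp
        next
          case False
          then obtain b where b: "B = ennreal b" "0 \<le> b" by (cases B rule: ennreal_cases) auto
          obtain c where c: "C = ennreal c" "0 \<le> c" using False by (cases C rule: ennreal_cases) auto
          have bpos: "b > 0" using B0 b by (auto simp: le_less)
          have "ennreal a \<le> ennreal (b / 2) * C + ennreal (1 / (2 * b)) * Snorm2 M D u (h K)"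
            using keyK Pint_bound[OF wm wpos bpos, of f "h K"] unfolding C_def u_def by simp
          also have "\<dots> \<le> ennreal (b / 2) * ennreal c + ennreal (1 / (2 * b)) * (ennreal b * ennreal a)"
            using Dle b c by (intro add_mono mult_left_mono) auto
          also have "\<dots> = ennreal (b / 2 * c + 1 / (2 * b) * (b * a))"
          proof -
            have e1: "ennreal (b / 2) * ennreal c = ennreal (b / 2 * c)"
              by (rule ennreal_mult[symmetric]) (use bpos c in simp_all)
            have e2: "ennreal b * ennreal a = ennreal (b * a)"
              by (rule ennreal_mult[symmetric]) (use bpos a0 in simp_all)
            have e3: "ennreal (1 / (2 * b)) * ennreal (b * a) = ennreal (1 / (2 * b) * (b * a))"
              by (rule ennreal_mult[symmetric]) (use bpos a0 in simp_all)
            have e4: "ennreal (b / 2 * c) + ennreal (1 / (2 * b) * (b * a)) = ennreal (b / 2 * c + 1 / (2 * b) * (b * a))"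
              by (rule ennreal_plus[symmetric]) (use bpos a0 c in simp_all)
            show ?thesis unfolding e1 e2 e3 e4 ..
          qed
          finally have "a \<le> b / 2 * c + 1 / (2 * b) * (b * a)"
            using b c a0 bpos by (subst (asm) ennreal_le_iff) auto
          then have "a \<le> b * c" using bpos by (rule final_real)
          then have "ennreal a \<le> ennreal (b * c)" by (rule ennreal_leI)
          then show ?thesis using ia b c by (simp add: ennreal_mult)
        qed
      qed
    qed
  qed
  show ?thesis
    unfolding W using each unfolding B_def C_def u_def by (intro SUP_least) auto
qed


end
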